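(* There is an absolute constant $C>0$ such that the following holds. Let $\lambda\vdash n$ and $\mu\vdash\Delta$ (with $\Delta\in\mathbb{N}$) be partitions with $\mu=\lambda\backslash\lambda_1$, and let $\pi\in S_n$. Then \[ \left|\chi_\lambda(\pi)-\chi_\mu(1)\binom{c_1(\pi)}{\Delta}\right|\leq C\,\chi_\mu(1)\sum_{j=1}^{\Delta}\binom{c_1(\pi)+\cdots+c_{j+1}(\pi)}{\Delta-j}. \]
   Context: For a partition $\lambda=(\lambda_1,\ldots,\lambda_l)\vdash n$ (with $\lambda_1\geq\cdots\geq\lambda_l\geq 1$), $\lambda\backslash\lambda_1:=(\lambda_2,\ldots,\lambda_l)$. $\chi_\lambda$ is the irreducible character of $S_n$ indexed by $\lambda$, and $\chi_\mu(1)$ is the degree of the irreducible character of $S_\Delta$ indexed by $\mu$. For $\pi\in S_n$ and $i\geq 1$, $c_i(\pi)$ denotes the number of $i$-cycles of $\pi$ (so $c_i(\pi)=0$ for $i>n$). *)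

theory Defs
  imports "HOL-Combinatorics.Combinatorics" "HOL-Library.FuncSet"
begin

definition is_partition :: "nat list \<Rightarrow> nat \<Rightarrow> bool" where
  "is_partition lam n \<longleftrightarrow> sorted_wrt (\<ge>) lam \<and> (\<forall>x\<in>set lam. 0 < x) \<and> sum_list lam = n"

text \<open>Permutations of S_n are permutations of {..<n}; their cycles are the orbits.\<close>
definition cycles_of :: "nat \<Rightarrow> (nat \<Rightarrow> nat) \<Rightarrow> nat set set" where
  "cycles_of n \<pi> = (\<lambda>x. orbit \<pi> x) ` {..<n}"

definition cyc_count :: "nat \<Rightarrow> (nat \<Rightarrow> nat) \<Rightarrow> nat \<Rightarrow> nat" where
  "cyc_count n \<pi> i = card {c \<in> cycles_of n \<pi>. card c = i}"

text \<open>Coefficient of x^alpha in the product of power sums p_{|c|}(x_0,...,x_{l-1}) over cycles c: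
  number of ways to assign each cycle to a variable with the prescribed exponents.\<close>
definition frob_count :: "nat set set \<Rightarrow> nat \<Rightarrow> (nat \<Rightarrow> int) \<Rightarrow> nat" where
  "frob_count Cs l \<alpha> = card {f \<in> Cs \<rightarrow>\<^sub>E {..<l}. \<forall>i<l. int (\<Sum>c\<in>{c\<in>Cs. f c = i}. card c) = \<alpha> i}"

text \<open>Irreducible character chi_lambda of S_n (n = |lambda|) at pi, via the Frobenius formula:
  chi_lambda(pi) = coefficient of x^(lambda+delta) in a_delta * prod_c p_{|c|}.\<close>
definition character :: "nat list \<Rightarrow> (nat \<Rightarrow> nat) \<Rightarrow> int" where
  "character lam \<pi> =
     (let n = sum_list lam; l = length lam; \<delta> = (\<lambda>i::nat. int l - 1 - int i) in
      \<Sum>\<sigma>\<in>{\<sigma>. \<sigma> permutes {..<l}}.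
        sign \<sigma> * int (frob_count (cycles_of n \<pi>) l (\<lambda>i. int (lam ! i) + \<delta> i - \<delta> (\<sigma> i))))"

end

theory Submission
  imports Defs
begin

fun Q :: "int set \<Rightarrow> int set \<Rightarrow> nat \<Rightarrow> nat" where
  "Q B V 0 = (if V = B then 1 else 0)"
| "Q B V (Suc m) = (\<Sum>x\<in>{x\<in>V. x - 1 \<notin> V}. Q B (insert (x - 1) (V - {x})) m)"

lemma Q_concat:
  assumes "finite V" "finite S"
  shows "(\<Sum>W\<in>S. Q W V r * Q B W m) \<le> Q B V (r + m)"
  using assms(1)
proof (induction r arbitrary: V)
  case 0
  have "(\<Sum>W\<in>S. Q W V 0 * Q B W m) = (\<Sum>W\<in>S. if W = V then Q B V m else 0)"
    by (intro sum.cong) auto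
  also have "\<dots> \<le> Q B V m"
    using assms(2) by (cases "V \<in> S") auto
  finally show ?case by simp
next
  case (Suc r)
  let ?X = "{x\<in>V. x - 1 \<notin> V}"
  have "(\<Sum>W\<in>S. Q W V (Suc r) * Q B W m)
      = (\<Sum>W\<in>S. \<Sum>x\<in>?X. Q W (insert (x - 1) (V - {x})) r * Q B W m)"
    by (simp add: sum_distrib_right)
  also have "\<dots> = (\<Sum>x\<in>?X. \<Sum>W\<in>S. Q W (insert (x - 1) (V - {x})) r * Q B W m)"
    by (rule sum.swap)
  also have "\<dots> \<le> (\<Sum>x\<in>?X. Q B (insert (x - 1) (V - {x})) (r + m))"
    by (intro sum_mono Suc.IH) (use Suc.prems in auto)
  also have "\<dots> = Q B V (Suc r + m)" by simp
  finally show ?case .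
qed

lemma Q_one_step:
  assumes "finite V" "x \<in> V" "x - 1 \<notin> V"
  shows "Q (insert (x - 1) (V - {x})) V 1 \<ge> 1"
proof -
  have "Q (insert (x - 1) (V - {x})) V 1 =
     (\<Sum>y\<in>{y\<in>V. y - 1 \<notin> V}. Q (insert (x - 1) (V - {x})) (insert (y - 1) (V - {y})) 0)"
    by (simp add: One_nat_def)
  also have "\<dots> \<ge> Q (insert (x - 1) (V - {x})) (insert (x - 1) (V - {x})) 0"
    by (rule member_le_sum) (use assms in auto)
  finally show ?thesis by simp
qed

lemma Q_path:
  assumes "finite V" "x \<in> V" "x - int (Suc r) \<notin> V"
  shows "Q (insert (x - int (Suc r)) (V - {x})) V (Suc r) \<ge> 1"
  using assms
proof (induction r arbitrary: x V)
  case 0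
  then show ?case using Q_one_step[of V x] by simp
next
  case (Suc r)
  let ?W = "insert (x - int (Suc (Suc r))) (V - {x})"
  show ?case
  proof (cases "x - 1 \<in> V")
    case False
    let ?V' = "insert (x - 1) (V - {x})"
    have "Q (insert (x - 1 - int (Suc r)) (?V' - {x - 1})) ?V' (Suc r) \<ge> 1"
      by (rule Suc.IH) (use Suc.prems False in \<open>auto simp: algebra_simps\<close>)
    moreover have "insert (x - 1 - int (Suc r)) (?V' - {x - 1}) = ?W"
      using False by auto
    ultimately have h: "Q ?W ?V' (Suc r) \<ge> 1" by simp
    have "Q ?W V (Suc (Suc r)) = (\<Sum>y\<in>{y\<in>V. y - 1 \<notin> V}. Q ?W (insert (y - 1) (V - {y})) (Suc r))"
      by simp
    also have "\<dots> \<ge> Q ?W ?V' (Suc r)"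
      by (rule member_le_sum) (use Suc.prems False in auto)
    finally show ?thesis using h by simp
  next
    case True
    let ?W2 = "insert (x - 1 - int (Suc r)) (V - {x - 1})"
    have h1: "Q ?W2 V (Suc r) \<ge> 1"
      by (rule Suc.IH) (use Suc.prems True in \<open>auto simp: algebra_simps\<close>)
    have "Q (insert (x - 1) (?W2 - {x})) ?W2 1 \<ge> 1"
      by (rule Q_one_step) (use Suc.prems True in auto)
    moreover have "insert (x - 1) (?W2 - {x}) = ?W" using True Suc.prems by auto
    ultimately have h2: "Q ?W ?W2 1 \<ge> 1" by simp
    have "(\<Sum>W\<in>{?W2}. Q W V (Suc r) * Q ?W W 1) \<le> Q ?W V (Suc r + 1)"
      by (rule Q_concat) (use Suc.prems in auto)
    hence "Q ?W2 V (Suc r) * Q ?W ?W2 1 \<le> Q ?W V (Suc (Suc r))" by simp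
    moreover have "1 \<le> Q ?W2 V (Suc r) * Q ?W ?W2 1" using mult_le_mono[OF h1 h2]
      by simp
    ultimately show ?thesis by linarith
  qed
qed

lemma Q_K:
  assumes "finite V" "r \<ge> 1"
  shows "(\<Sum>x\<in>V. if x - int r \<notin> V then Q B (insert (x - int r) (V - {x})) m else 0) \<le> Q B V (r + m)"
proof -
  let ?X = "{x\<in>V. x - int r \<notin> V}"
  let ?w = "\<lambda>x. insert (x - int r) (V - {x})"
  have "(\<Sum>x\<in>V. if x - int r \<notin> V then Q B (?w x) m else 0) = (\<Sum>x\<in>?X. Q B (?w x) m)"
    using assms(1) by (simp add: sum.inter_filter)
  also have "\<dots> \<le> (\<Sum>x\<in>?X. Q (?w x) V r * Q B (?w x) m)"
  proof (intro sum_mono)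
    fix x assume x: "x \<in> ?X"
    obtain r' where r': "r = Suc r'" using assms(2) by (cases r) auto
    have "Q (?w x) V r \<ge> 1" using Q_path[of V x r'] x r' assms(1) by simp
    thus "Q B (?w x) m \<le> Q (?w x) V r * Q B (?w x) m" by simp
  qed
  also have "\<dots> = (\<Sum>W\<in>?w ` ?X. Q W V r * Q B W m)"
  proof (rule sum.reindex[symmetric, unfolded comp_def])
    show "inj_on ?w ?X"
    proof
      fix x y assume "x \<in> ?X" "y \<in> ?X" "?w x = ?w y"
      show "x = y"
      proof (rule ccontr)
        assume "x \<noteq> y"
        hence "y \<in> ?w x" using \<open>y \<in> ?X\<close> by auto
        hence "y \<in> ?w y" using \<open>?w x = ?w y\<close> by simp
        thus False using assms(2) by auto
      qed
    qed
  qed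
  also have "\<dots> \<le> Q B V (r + m)" by (rule Q_concat) (use assms in auto)
  finally show ?thesis .
qed

definition NN :: "nat set set \<Rightarrow> nat set \<Rightarrow> (nat \<Rightarrow> int) \<Rightarrow> nat" where
  "NN U A \<alpha> = card {f \<in> U \<rightarrow>\<^sub>E A. \<forall>i\<in>A. int (\<Sum>c\<in>{c\<in>U. f c = i}. card c) = \<alpha> i}"

lemma NN_cong: "(\<And>i. i \<in> A \<Longrightarrow> \<alpha> i = \<alpha>' i) \<Longrightarrow> NN U A \<alpha> = NN U A \<alpha>'"
  unfolding NN_def by (intro arg_cong[where f=card]) auto

lemma NN_empty: "NN {} A \<alpha> = (if \<forall>i\<in>A. \<alpha> i = 0 then 1 else 0)"
proof (cases "\<forall>i\<in>A. \<alpha> i = 0")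
  case True
  hence "{f \<in> {} \<rightarrow>\<^sub>E A. \<forall>i\<in>A. int (\<Sum>c\<in>{c\<in>{}. f c = i}. card c) = \<alpha> i} = {} \<rightarrow>\<^sub>E A" by auto
  thus ?thesis using True unfolding NN_def by simp
next
  case False
  hence "{f \<in> {} \<rightarrow>\<^sub>E A. \<forall>i\<in>A. int (\<Sum>c\<in>{c\<in>{}. f c = i}. card c) = \<alpha> i} = {}" by auto
  thus ?thesis using False unfolding NN_def by simp
qed

lemma load_upd:
  assumes "c \<notin> U" "finite U"
  shows "(\<Sum>c'\<in>{c'\<in>insert c U. (g(c := i)) c' = j}. card c') =
         (\<Sum>c'\<in>{c'\<in>U. g c' = j}. card c') + (if j = i then card c else 0)"
proof -
  have "{c'\<in>insert c U. (g(c := i)) c' = j} = (if i = j then insert c {c'\<in>U. g c' = j} else {c'\<in>U. g c' = j})"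
    using assms by auto
  thus ?thesis using assms by auto
qed

lemma NN_insert:
  assumes "finite U" "c \<notin> U" "finite A"
  shows "NN (insert c U) A \<alpha> = (\<Sum>i\<in>A. NN U A (\<alpha>(i := \<alpha> i - int (card c))))"
proof -
  define S where "S = {f \<in> insert c U \<rightarrow>\<^sub>E A. \<forall>j\<in>A. int (\<Sum>c'\<in>{c'\<in>insert c U. f c' = j}. card c') = \<alpha> j}"
  define T where "T = (\<lambda>i. {g \<in> U \<rightarrow>\<^sub>E A. \<forall>j\<in>A. int (\<Sum>c'\<in>{c'\<in>U. g c' = j}. card c') = (\<alpha>(i := \<alpha> i - int (card c))) j})"
  have bij: "bij_betw (\<lambda>(i, g). g(c := i)) (SIGMA i:A. T i) S"
  proof (rule bij_betw_byWitness[where f' = "\<lambda>f. (f c, f(c := undefined))"])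
    show "\<forall>a\<in>SIGMA i:A. T i. (\<lambda>f. (f c, f(c := undefined))) ((\<lambda>(i, g). g(c := i)) a) = a"
    proof
      fix a assume "a \<in> (SIGMA i:A. T i)"
      then obtain i g where a: "a = (i, g)" "i \<in> A" "g \<in> U \<rightarrow>\<^sub>E A" unfolding T_def by auto
      have "g c = undefined" using a(3) assms(2) by (auto simp: PiE_def extensional_def)
      thus "(\<lambda>f. (f c, f(c := undefined))) ((\<lambda>(i, g). g(c := i)) a) = a" using a by auto
    qed
    show "\<forall>a'\<in>S. (\<lambda>(i, g). g(c := i)) ((\<lambda>f. (f c, f(c := undefined))) a') = a'" by auto
    show "(\<lambda>(i, g). g(c := i)) ` (SIGMA i:A. T i) \<subseteq> S"
    proof clarsimp
      fix i g assume i: "i \<in> A" and g: "g \<in> T i"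
      have gP: "g \<in> U \<rightarrow>\<^sub>E A" using g unfolding T_def by auto
      show "g(c := i) \<in> S" unfolding S_def
      proof (intro CollectI conjI ballI)
        show "g(c := i) \<in> insert c U \<rightarrow>\<^sub>E A" using gP i by (auto simp: PiE_def extensional_def)
        fix j assume j: "j \<in> A"
        show "int (\<Sum>c'\<in>{c'\<in>insert c U. (g(c := i)) c' = j}. card c') = \<alpha> j"
          using g j unfolding load_upd[OF assms(2,1)] T_def by (auto split: if_splits)
      qed
    qed
    show "(\<lambda>f. (f c, f(c := undefined))) ` S \<subseteq> (SIGMA i:A. T i)"
    proof clarsimp
      fix f assume f: "f \<in> S"
      have fP: "f \<in> insert c U \<rightarrow>\<^sub>E A" using f unfolding S_def by auto
      have fc: "f c \<in> A" using fP by auto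
      have g: "f(c := undefined) \<in> U \<rightarrow>\<^sub>E A" using fP assms(2) by (auto simp: PiE_def extensional_def)
      have eq: "(f(c := undefined))(c := f c) = f" by simp
      have "\<forall>j\<in>A. int (\<Sum>c'\<in>{c'\<in>U. (f(c := undefined)) c' = j}. card c') = (\<alpha>(f c := \<alpha> (f c) - int (card c))) j"
      proof
        fix j assume j: "j \<in> A"
        have h1: "int (\<Sum>c'\<in>{c'\<in>insert c U. f c' = j}. card c') = \<alpha> j" using f j unfolding S_def by auto
        have se: "{c'\<in>U. (f(c := undefined)) c' = j} = {c'\<in>U. f c' = j}" using assms(2) by auto
        have h2: "(\<Sum>c'\<in>{c'\<in>insert c U. f c' = j}. card c') = (\<Sum>c'\<in>{c'\<in>U. f c' = j}. card c') + (if j = f c then card c else 0)"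
          using load_upd[OF assms(2,1), of "f(c := undefined)" "f c" j] unfolding eq se .
        define s1 where "s1 = (\<Sum>c'\<in>{c'\<in>insert c U. f c' = j}. card c')"
        define s2 where "s2 = (\<Sum>c'\<in>{c'\<in>U. f c' = j}. card c')"
        have "int s2 = (\<alpha>(f c := \<alpha> (f c) - int (card c))) j"
          using h1 h2 unfolding s1_def[symmetric] s2_def[symmetric] by (auto split: if_splits)
        thus "int (\<Sum>c'\<in>{c'\<in>U. (f(c := undefined)) c' = j}. card c') = (\<alpha>(f c := \<alpha> (f c) - int (card c))) j"
          unfolding se s2_def .
      qed
      thus "f c \<in> A \<and> f(c := undefined) \<in> T (f c)" using fc g unfolding T_def by auto
    qed
  qed
  have fin: "\<And>i. finite (T i)" unfolding T_def using assms by (intro finite_subset[OF _ finite_PiE[of U "\<lambda>_. A"]]) auto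
  have "NN (insert c U) A \<alpha> = card S" unfolding NN_def S_def ..
  also have "\<dots> = card (SIGMA i:A. T i)" using bij_betw_same_card[OF bij] by simp
  also have "\<dots> = (\<Sum>i\<in>A. card (T i))" by (rule card_SigmaI[OF assms(3)]) (simp add: fin)
  also have "\<dots> = (\<Sum>i\<in>A. NN U A (\<alpha>(i := \<alpha> i - int (card c))))" unfolding NN_def T_def ..
  finally show ?thesis .
qed

lemma NN_perm_le:
  assumes "\<tau> permutes A" "finite U" "finite A"
  shows "NN U A (\<alpha> \<circ> \<tau>) \<le> NN U A \<alpha>"
proof -
  let ?S1 = "{f \<in> U \<rightarrow>\<^sub>E A. \<forall>i\<in>A. int (\<Sum>c\<in>{c\<in>U. f c = i}. card c) = (\<alpha> \<circ> \<tau>) i}"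
  let ?S2 = "{f \<in> U \<rightarrow>\<^sub>E A. \<forall>i\<in>A. int (\<Sum>c\<in>{c\<in>U. f c = i}. card c) = \<alpha> i}"
  show ?thesis unfolding NN_def
  proof (rule card_inj_on_le[where f = "\<lambda>f. restrict (\<tau> \<circ> f) U"])
    show "finite ?S2" using assms by (auto intro!: finite_PiE)
    show "inj_on (\<lambda>f. restrict (\<tau> \<circ> f) U) ?S1"
    proof
      fix f g assume f: "f \<in> ?S1" and g: "g \<in> ?S1" and e: "restrict (\<tau> \<circ> f) U = restrict (\<tau> \<circ> g) U"
      show "f = g"
      proof
        fix x show "f x = g x"
        proof (cases "x \<in> U")
          case True
          hence "\<tau> (f x) = \<tau> (g x)" using fun_cong[OF e, of x] by simp
          thus ?thesis using permutes_inj[OF assms(1)] by (auto dest: injD)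
        next
          case False thus ?thesis using f g by (auto simp: PiE_def extensional_def)
        qed
      qed
    qed
    show "(\<lambda>f. restrict (\<tau> \<circ> f) U) ` ?S1 \<subseteq> ?S2"
    proof (rule image_subsetI)
      fix f assume f1: "f \<in> ?S1"
      have fP: "f \<in> U \<rightarrow>\<^sub>E A" using f1 by simp
      have fl: "\<forall>i\<in>A. int (\<Sum>c\<in>{c\<in>U. f c = i}. card c) = \<alpha> (\<tau> i)" using f1 by simp
      show "restrict (\<tau> \<circ> f) U \<in> ?S2"
      proof (intro CollectI conjI)
        show "restrict (\<tau> \<circ> f) U \<in> U \<rightarrow>\<^sub>E A" using fP permutes_in_image[OF assms(1)] by auto
        show "\<forall>i\<in>A. int (\<Sum>c\<in>{c\<in>U. restrict (\<tau> \<circ> f) U c = i}. card c) = \<alpha> i"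
        proof
          fix i assume i: "i \<in> A"
          have iff: "\<And>y. \<tau> y = i \<longleftrightarrow> y = inv \<tau> i"
            using permutes_inverses[OF assms(1)] by metis
          have se: "{c\<in>U. restrict (\<tau> \<circ> f) U c = i} = {c\<in>U. f c = inv \<tau> i}"
            using iff by auto
          have ia: "inv \<tau> i \<in> A" using i permutes_in_image[OF permutes_inv[OF assms(1)]] by simp
          have ti: "\<tau> (inv \<tau> i) = i" using permutes_inverses[OF assms(1)] by simp
          have "int (\<Sum>c\<in>{c\<in>U. f c = inv \<tau> i}. card c) = \<alpha> (\<tau> (inv \<tau> i))"
            using fl ia by blast
          thus "int (\<Sum>c\<in>{c\<in>U. restrict (\<tau> \<circ> f) U c = i}. card c) = \<alpha> i"
            unfolding se ti .
        qed
      qed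
    qed
  qed
qed

lemma NN_perm:
  assumes "\<tau> permutes A" "finite U" "finite A"
  shows "NN U A (\<alpha> \<circ> \<tau>) = NN U A \<alpha>"
proof (rule antisym)
  show "NN U A (\<alpha> \<circ> \<tau>) \<le> NN U A \<alpha>" by (rule NN_perm_le[OF assms])
  have "NN U A ((\<alpha> \<circ> \<tau>) \<circ> inv \<tau>) \<le> NN U A (\<alpha> \<circ> \<tau>)"
    by (rule NN_perm_le[OF permutes_inv[OF assms(1)] assms(2,3)])
  moreover have "(\<alpha> \<circ> \<tau>) \<circ> inv \<tau> = \<alpha>"
    using permutes_inverses[OF assms(1)] by (auto simp: fun_eq_iff)
  ultimately show "NN U A \<alpha> \<le> NN U A (\<alpha> \<circ> \<tau>)" by simp
qed

definition dl :: "nat \<Rightarrow> nat \<Rightarrow> int" where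
  "dl l i = int l - 1 - int i"

lemma dl_inj: "dl l i = dl l j \<longleftrightarrow> i = j"
  unfolding dl_def by auto

definition GG :: "nat \<Rightarrow> nat set \<Rightarrow> (nat \<Rightarrow> nat) set \<Rightarrow> (nat \<Rightarrow> int) \<Rightarrow> nat set set \<Rightarrow> int" where
  "GG l A P \<beta> U = (\<Sum>\<sigma>\<in>P. sign \<sigma> * int (NN U A (\<lambda>i. \<beta> i - dl l (\<sigma> i))))"

lemma GG_insert:
  assumes "finite U" "c \<notin> U" "finite A"
  shows "GG l A P \<beta> (insert c U) = (\<Sum>i\<in>A. GG l A P (\<beta>(i := \<beta> i - int (card c))) U)"
proof -
  have "GG l A P \<beta> (insert c U) =
     (\<Sum>\<sigma>\<in>P. \<Sum>i\<in>A. sign \<sigma> * int (NN U A ((\<lambda>j. \<beta> j - dl l (\<sigma> j))(i := \<beta> i - dl l (\<sigma> i) - int (card c)))))"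
    unfolding GG_def NN_insert[OF assms] by (simp add: sum_distrib_left)
  also have "\<dots> = (\<Sum>\<sigma>\<in>P. \<Sum>i\<in>A. sign \<sigma> * int (NN U A (\<lambda>j. (\<beta>(i := \<beta> i - int (card c))) j - dl l (\<sigma> j))))"
    by (intro sum.cong refl arg_cong2[where f="(*)"] arg_cong[where f=int] NN_cong) auto
  also have "\<dots> = (\<Sum>i\<in>A. GG l A P (\<beta>(i := \<beta> i - int (card c))) U)"
    unfolding GG_def by (rule sum.swap)
  finally show ?thesis .
qed

lemma GG_swap:
  assumes "a \<in> A" "b \<in> A" "a \<noteq> b" "finite A" "finite U"
    and perm: "\<And>\<sigma>. \<sigma> \<in> P \<Longrightarrow> permutation \<sigma>"
    and clos: "\<And>\<sigma>. \<sigma> \<in> P \<Longrightarrow> \<sigma> \<circ> Transposition.transpose a b \<in> P"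
  shows "GG l A P (\<beta> \<circ> Transposition.transpose a b) U = - GG l A P \<beta> U"
proof -
  let ?t = "Transposition.transpose a b"
  have tp: "?t permutes A" using assms(1,2) by (rule permutes_swap_id)
  have tt: "\<And>i. ?t (?t i) = i" by simp
  have "GG l A P (\<beta> \<circ> ?t) U = (\<Sum>\<sigma>\<in>P. sign \<sigma> * int (NN U A ((\<lambda>i. \<beta> i - dl l ((\<sigma> \<circ> ?t) i)) \<circ> ?t)))"
    unfolding GG_def by (intro sum.cong refl) (simp add: comp_def)
  also have "\<dots> = (\<Sum>\<sigma>\<in>P. sign \<sigma> * int (NN U A (\<lambda>i. \<beta> i - dl l ((\<sigma> \<circ> ?t) i))))"
    by (simp only: NN_perm[OF tp assms(5,4)])
  also have "\<dots> = (\<Sum>\<sigma>\<in>P. - (sign (\<sigma> \<circ> ?t) * int (NN U A (\<lambda>i. \<beta> i - dl l ((\<sigma> \<circ> ?t) i)))))"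
  proof (intro sum.cong refl)
    fix \<sigma> assume "\<sigma> \<in> P"
    hence "sign (\<sigma> \<circ> ?t) = - sign \<sigma>"
      using perm sign_compose[of \<sigma> ?t] sign_swap_id[of a b] assms(3)
      by (simp add: permutation_swap_id)
    thus "sign \<sigma> * int (NN U A (\<lambda>i. \<beta> i - dl l ((\<sigma> \<circ> ?t) i))) =
          - (sign (\<sigma> \<circ> ?t) * int (NN U A (\<lambda>i. \<beta> i - dl l ((\<sigma> \<circ> ?t) i))))" by simp
  qed
  also have "\<dots> = - (\<Sum>\<sigma>\<in>P. sign (\<sigma> \<circ> ?t) * int (NN U A (\<lambda>i. \<beta> i - dl l ((\<sigma> \<circ> ?t) i))))"
    by (simp add: sum_negf)
  also have "(\<Sum>\<sigma>\<in>P. sign (\<sigma> \<circ> ?t) * int (NN U A (\<lambda>i. \<beta> i - dl l ((\<sigma> \<circ> ?t) i)))) = GG l A P \<beta> U"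
    unfolding GG_def
    by (rule sum.reindex_bij_witness[where i="\<lambda>\<sigma>. \<sigma> \<circ> ?t" and j="\<lambda>\<sigma>. \<sigma> \<circ> ?t"])
       (auto simp: comp_assoc clos)
  finally show ?thesis .
qed

lemma GG_zero:
  assumes "a \<in> A" "b \<in> A" "a \<noteq> b" "finite A" "finite U" "\<beta> a = \<beta> b"
    and perm: "\<And>\<sigma>. \<sigma> \<in> P \<Longrightarrow> permutation \<sigma>"
    and clos: "\<And>a b \<sigma>. a \<in> A \<Longrightarrow> b \<in> A \<Longrightarrow> \<sigma> \<in> P \<Longrightarrow> \<sigma> \<circ> Transposition.transpose a b \<in> P"
  shows "GG l A P \<beta> U = 0"
proof -
  have "\<beta> \<circ> Transposition.transpose a b = \<beta>" using assms(6)
    by (auto simp: fun_eq_iff transpose_def)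
  hence "GG l A P \<beta> U = - GG l A P \<beta> U"
    using GG_swap[OF assms(1-5) perm clos[OF assms(1,2)], of l \<beta>] by simp
  thus ?thesis by simp
qed

lemma GG_noninj:
  assumes "\<not> inj_on \<beta> A" "finite A" "finite U"
    and perm: "\<And>\<sigma>. \<sigma> \<in> P \<Longrightarrow> permutation \<sigma>"
    and clos: "\<And>a b \<sigma>. a \<in> A \<Longrightarrow> b \<in> A \<Longrightarrow> \<sigma> \<in> P \<Longrightarrow> \<sigma> \<circ> Transposition.transpose a b \<in> P"
  shows "GG l A P \<beta> U = 0"
proof -
  obtain a b where "a \<in> A" "b \<in> A" "a \<noteq> b" "\<beta> a = \<beta> b" using assms(1) unfolding inj_on_def by blast
  thus ?thesis using GG_zero[OF _ _ _ assms(2,3) _ perm clos] by blast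
qed

lemma GG_empty:
  "GG l A P \<beta> {} = (\<Sum>\<sigma>\<in>P. if \<forall>i\<in>A. \<beta> i = dl l (\<sigma> i) then sign \<sigma> else 0)"
  unfolding GG_def NN_empty by (intro sum.cong refl) auto

lemma upd_inj_iff:
  assumes "inj_on \<beta> A" "i \<in> A" "v \<noteq> \<beta> i"
  shows "inj_on (\<beta>(i := v)) A \<longleftrightarrow> v \<notin> \<beta> ` A"
proof
  assume inj: "inj_on (\<beta>(i := v)) A"
  show "v \<notin> \<beta> ` A"
  proof
    assume "v \<in> \<beta> ` A"
    then obtain j where j: "j \<in> A" "v = \<beta> j" by auto
    hence "j \<noteq> i" using assms(3) by auto
    hence "(\<beta>(i := v)) i = (\<beta>(i := v)) j" using j by simp
    thus False using inj_onD[OF inj _ assms(2) j(1)] \<open>j \<noteq> i\<close> by simp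
  qed
next
  assume "v \<notin> \<beta> ` A"
  thus "inj_on (\<beta>(i := v)) A" using assms(1) unfolding inj_on_def by (auto split: if_splits)
qed

lemma upd_image:
  assumes "inj_on \<beta> A" "i \<in> A"
  shows "(\<beta>(i := v)) ` A = insert v (\<beta> ` A - {\<beta> i})"
  using assms unfolding inj_on_def by (auto simp: image_iff split: if_splits)

lemma REIDX:
  fixes h :: "int set \<Rightarrow> 'b::comm_monoid_add"
  assumes "finite A" "inj_on \<beta> A" "r \<ge> 1"
  shows "(\<Sum>i\<in>A. if inj_on (\<beta>(i := \<beta> i - int r)) A then h ((\<beta>(i := \<beta> i - int r)) ` A) else 0)
       = (\<Sum>x\<in>\<beta> ` A. if x - int r \<notin> \<beta> ` A then h (insert (x - int r) (\<beta> ` A - {x})) else 0)"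
proof -
  have "(\<Sum>x\<in>\<beta> ` A. if x - int r \<notin> \<beta> ` A then h (insert (x - int r) (\<beta> ` A - {x})) else 0)
      = (\<Sum>i\<in>A. if \<beta> i - int r \<notin> \<beta> ` A then h (insert (\<beta> i - int r) (\<beta> ` A - {\<beta> i})) else 0)"
    using sum.reindex[OF assms(2)] by (simp add: comp_def)
  also have "\<dots> = (\<Sum>i\<in>A. if inj_on (\<beta>(i := \<beta> i - int r)) A then h ((\<beta>(i := \<beta> i - int r)) ` A) else 0)"
  proof (intro sum.cong refl)
    fix i assume i: "i \<in> A"
    have "\<beta> i - int r \<noteq> \<beta> i" using assms(3) by simp
    hence e1: "inj_on (\<beta>(i := \<beta> i - int r)) A \<longleftrightarrow> \<beta> i - int r \<notin> \<beta> ` A"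
      using upd_inj_iff[OF assms(2) i] by blast
    have e2: "(\<beta>(i := \<beta> i - int r)) ` A = insert (\<beta> i - int r) (\<beta> ` A - {\<beta> i})"
      using upd_image[OF assms(2) i] by blast
    show "(if \<beta> i - int r \<notin> \<beta> ` A then h (insert (\<beta> i - int r) (\<beta> ` A - {\<beta> i})) else 0) =
          (if inj_on (\<beta>(i := \<beta> i - int r)) A then h ((\<beta>(i := \<beta> i - int r)) ` A) else 0)"
      unfolding e1 e2 by (rule refl)
  qed
  finally show ?thesis by simp
qed

lemma sign_abs: "\<bar>sign \<sigma>\<bar> = 1"
  unfolding sign_def by simp

lemma GG_bound:
  assumes finA: "finite A" and finP: "finite P"
    and perm: "\<And>\<sigma>. \<sigma> \<in> P \<Longrightarrow> permutation \<sigma>"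
    and clos: "\<And>a b \<sigma>. a \<in> A \<Longrightarrow> b \<in> A \<Longrightarrow> \<sigma> \<in> P \<Longrightarrow> \<sigma> \<circ> Transposition.transpose a b \<in> P"
    and uniq: "\<And>\<sigma> \<sigma>'. \<sigma> \<in> P \<Longrightarrow> \<sigma>' \<in> P \<Longrightarrow> (\<forall>i\<in>A. \<sigma> i = \<sigma>' i) \<Longrightarrow> \<sigma> = \<sigma>'"
    and img: "\<And>\<sigma>. \<sigma> \<in> P \<Longrightarrow> \<sigma> ` A = Aim"
    and finU: "finite U" and cards: "\<forall>c\<in>U. card c \<ge> 1"
  shows "\<bar>GG l A P \<beta> U\<bar> \<le> (if inj_on \<beta> A then int (Q (dl l ` Aim) (\<beta> ` A) (\<Sum>c\<in>U. card c)) else 0)"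
  using finU cards
proof (induction U arbitrary: \<beta> rule: finite_induct)
  case empty
  let ?X = "{\<sigma>\<in>P. \<forall>i\<in>A. \<beta> i = dl l (\<sigma> i)}"
  have G: "GG l A P \<beta> {} = (\<Sum>\<sigma>\<in>?X. sign \<sigma>)"
    unfolding GG_empty using finP by (simp add: sum.inter_filter)
  show ?case
  proof (cases "?X = {}")
    case True
    show ?thesis unfolding G True by simp
  next
    case False
    then obtain \<sigma>0 where s0: "\<sigma>0 \<in> P" "\<forall>i\<in>A. \<beta> i = dl l (\<sigma>0 i)" by auto
    have X: "?X = {\<sigma>0}"
    proof
      show "?X \<subseteq> {\<sigma>0}"
      proof
        fix \<sigma> assume sX: "\<sigma> \<in> ?X"
        have sP: "\<sigma> \<in> P" and sb: "\<forall>i\<in>A. \<beta> i = dl l (\<sigma> i)" using sX by blast+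
        have ai: "\<forall>i\<in>A. \<sigma> i = \<sigma>0 i"
        proof
          fix i assume i: "i \<in> A"
          have e1: "\<beta> i = dl l (\<sigma> i)" using sb i by blast
          have e2: "\<beta> i = dl l (\<sigma>0 i)" using s0(2) i by blast
          have "dl l (\<sigma> i) = dl l (\<sigma>0 i)" by (rule trans[OF e1[symmetric] e2])
          thus "\<sigma> i = \<sigma>0 i" by (simp only: dl_inj)
        qed
        have "\<sigma> = \<sigma>0" by (rule uniq[OF sP s0(1) ai])
        thus "\<sigma> \<in> {\<sigma>0}" by blast
      qed
      show "{\<sigma>0} \<subseteq> ?X" using s0 by blast
    qed
    have injs: "inj \<sigma>0" using perm[OF s0(1)] by (simp add: permutation_bijective bij_is_inj)
    have inj: "inj_on \<beta> A"
    proof (rule inj_onI)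
      fix x y assume xy: "x \<in> A" "y \<in> A" "\<beta> x = \<beta> y"
      hence "dl l (\<sigma>0 x) = dl l (\<sigma>0 y)" using s0(2) by simp
      hence "\<sigma>0 x = \<sigma>0 y" by (simp add: dl_inj)
      thus "x = y" using injs by (simp add: inj_eq)
    qed
    have "\<beta> ` A = (\<lambda>i. dl l (\<sigma>0 i)) ` A" using s0(2) by (intro image_cong) auto
    also have "\<dots> = dl l ` (\<sigma>0 ` A)" by (simp add: image_image)
    finally have im: "\<beta> ` A = dl l ` Aim" using img[OF s0(1)] by simp
    show ?thesis unfolding G X using inj im by (simp add: sign_abs)
  qed
next
  case (insert c U)
  show ?case
  proof (cases "inj_on \<beta> A")
    case False
    then show ?thesis using GG_noninj[OF False finA _ perm clos] insert.hyps by simp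
  next
    case True
    define r where "r = card c"
    have r1: "r \<ge> 1" using insert.prems r_def by simp
    let ?B = "dl l ` Aim"
    let ?m = "\<Sum>c\<in>U. card c"
    have "\<bar>GG l A P \<beta> (insert c U)\<bar> = \<bar>\<Sum>i\<in>A. GG l A P (\<beta>(i := \<beta> i - int r)) U\<bar>"
      unfolding r_def using GG_insert[OF insert.hyps(1,2) finA] by simp
    also have "\<dots> \<le> (\<Sum>i\<in>A. \<bar>GG l A P (\<beta>(i := \<beta> i - int r)) U\<bar>)" by (rule sum_abs)
    also have "\<dots> \<le> (\<Sum>i\<in>A. if inj_on (\<beta>(i := \<beta> i - int r)) A then int (Q ?B ((\<beta>(i := \<beta> i - int r)) ` A) ?m) else 0)"
      by (intro sum_mono insert.IH) (use insert.prems in auto)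
    also have "\<dots> = (\<Sum>x\<in>\<beta> ` A. if x - int r \<notin> \<beta> ` A then int (Q ?B (insert (x - int r) (\<beta> ` A - {x})) ?m) else 0)"
      by (rule REIDX[OF finA True r1])
    also have "\<dots> = int (\<Sum>x\<in>\<beta> ` A. if x - int r \<notin> \<beta> ` A then Q ?B (insert (x - int r) (\<beta> ` A - {x})) ?m else 0)"
      unfolding of_nat_sum by (intro sum.cong refl) simp
    also have "\<dots> \<le> int (Q ?B (\<beta> ` A) (r + ?m))"
      using Q_K[OF _ r1, of "\<beta> ` A" ?B ?m] finA by (simp only: of_nat_le_iff finite_imageI)
    also have "r + ?m = (\<Sum>c\<in>insert c U. card c)" using insert.hyps r_def by simp
    finally show ?thesis using True by simp
  qed
qed

lemma sorted_inj:
  fixes A :: "nat set"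
  assumes "\<forall>i\<in>A. \<forall>j\<in>A. i < j \<longrightarrow> \<beta> j < (\<beta> i :: int)"
  shows "inj_on \<beta> A"
proof (rule inj_onI)
  fix x y assume xy: "x \<in> A" "y \<in> A" "\<beta> x = \<beta> y"
  show "x = y"
  proof (rule ccontr)
    assume "x \<noteq> y"
    hence "x < y \<or> y < x" by auto
    thus False using assms xy by force
  qed
qed

lemma sorted_count:
  fixes A :: "nat set"
  assumes "finite A" "\<forall>i\<in>A. \<forall>j\<in>A. i < j \<longrightarrow> \<beta> j < (\<beta> i :: int)" "i \<in> A"
  shows "card {j\<in>A. j < i} = card {y\<in>\<beta> ` A. \<beta> i < y}"
proof -
  have inj: "inj_on \<beta> A" using assms(2) by (rule sorted_inj)
  have "\<beta> ` {j\<in>A. j < i} = {y\<in>\<beta> ` A. \<beta> i < y}"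
  proof
    show "\<beta> ` {j\<in>A. j < i} \<subseteq> {y\<in>\<beta> ` A. \<beta> i < y}" using assms by auto
    show "{y\<in>\<beta> ` A. \<beta> i < y} \<subseteq> \<beta> ` {j\<in>A. j < i}"
    proof
      fix y assume "y \<in> {y\<in>\<beta> ` A. \<beta> i < y}"
      then obtain j where j: "j \<in> A" "y = \<beta> j" "\<beta> i < \<beta> j" by auto
      have "j < i"
      proof (rule ccontr)
        assume "\<not> j < i"
        hence "j = i \<or> i < j" by auto
        thus False
        proof
          assume "j = i" thus False using j by simp
        next
          assume "i < j" hence "\<beta> j < \<beta> i" using assms(2) assms(3) j(1) by blast
          thus False using j(3) by simp
        qed
      qed
      thus "y \<in> \<beta> ` {j\<in>A. j < i}" using j by auto
    qed
  qed
  moreover have "inj_on \<beta> {j\<in>A. j < i}" using inj by (rule inj_on_subset) auto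
  ultimately show ?thesis by (metis card_image)
qed

lemma sorted_unique:
  fixes A :: "nat set"
  assumes "finite A" "\<forall>i\<in>A. \<forall>j\<in>A. i < j \<longrightarrow> \<beta> j < (\<beta> i :: int)"
    "\<forall>i\<in>A. \<forall>j\<in>A. i < j \<longrightarrow> \<gamma> j < (\<gamma> i :: int)" "\<beta> ` A = \<gamma> ` A" "i \<in> A"
  shows "\<beta> i = \<gamma> i"
proof -
  obtain j where j: "j \<in> A" "\<beta> i = \<gamma> j" using assms(4,5) by (metis imageE imageI)
  have ceq: "card {k\<in>A. k < i} = card {k\<in>A. k < j}"
    using sorted_count[OF assms(1,2,5)] sorted_count[OF assms(1,3) j(1)] assms(4) j(2) by simp
  have lt: "card {k\<in>A. k < a} < card {k\<in>A. k < b}" if ab: "a < b" "a \<in> A" for a b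
  proof -
    have "{k\<in>A. k < a} \<subseteq> {k\<in>A. k < b}" using ab by auto
    moreover have "a \<in> {k\<in>A. k < b}" "a \<notin> {k\<in>A. k < a}" using ab by auto
    ultimately have "{k\<in>A. k < a} \<subset> {k\<in>A. k < b}" by blast
    moreover have "finite {k\<in>A. k < b}" using assms(1) by simp
    ultimately show ?thesis by (rule psubset_card_mono[rotated])
  qed
  have "i = j"
  proof (rule ccontr)
    assume "i \<noteq> j"
    hence "i < j \<or> j < i" by auto
    thus False
    proof
      assume "i < j" thus False using lt[of i j] assms(5) ceq by simp
    next
      assume "j < i" thus False using lt[of j i] j(1) ceq by simp
    qed
  qed
  thus ?thesis using j by simp
qed

lemma GG_sorted:
  assumes finA: "finite A" and finP: "finite P"
    and perm: "\<And>\<sigma>. \<sigma> \<in> P \<Longrightarrow> permutation \<sigma>"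
    and clos: "\<And>a b \<sigma>. a \<in> A \<Longrightarrow> b \<in> A \<Longrightarrow> \<sigma> \<in> P \<Longrightarrow> \<sigma> \<circ> Transposition.transpose a b \<in> P"
    and uniq: "\<And>\<sigma> \<sigma>'. \<sigma> \<in> P \<Longrightarrow> \<sigma>' \<in> P \<Longrightarrow> (\<forall>i\<in>A. \<sigma> i = \<sigma>' i) \<Longrightarrow> \<sigma> = \<sigma>'"
    and img: "\<And>\<sigma>. \<sigma> \<in> P \<Longrightarrow> \<sigma> ` A = A"
    and idP: "id \<in> P"
    and finU: "finite U" and cards: "\<forall>c\<in>U. card c = 1"
    and sorted: "\<forall>i\<in>A. \<forall>j\<in>A. i < j \<longrightarrow> \<beta> j < \<beta> i"
  shows "GG l A P \<beta> U = int (Q (dl l ` A) (\<beta> ` A) (card U))"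
  using finU cards sorted
proof (induction U arbitrary: \<beta> rule: finite_induct)
  case empty
  let ?X = "{\<sigma>\<in>P. \<forall>i\<in>A. \<beta> i = dl l (\<sigma> i)}"
  have G: "GG l A P \<beta> {} = (\<Sum>\<sigma>\<in>?X. sign \<sigma>)"
    unfolding GG_empty using finP by (simp add: sum.inter_filter)
  have dls: "\<forall>i\<in>A. \<forall>j\<in>A. i < j \<longrightarrow> dl l j < dl l i" unfolding dl_def by auto
  show ?case
  proof (cases "\<beta> ` A = dl l ` A")
    case True
    have eq: "\<forall>i\<in>A. \<beta> i = dl l i" using sorted_unique[OF finA empty.prems(2) dls True] by blast
    have X: "?X = {id}"
    proof
      show "?X \<subseteq> {id}"
      proof
        fix \<sigma> assume "\<sigma> \<in> ?X"
        have ai: "\<forall>i\<in>A. \<sigma> i = id i"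
        proof
          fix i assume i: "i \<in> A"
          have e1: "\<beta> i = dl l (\<sigma> i)" using \<open>\<sigma> \<in> ?X\<close> i by blast
          have e2: "\<beta> i = dl l i" using eq i by blast
          have "dl l (\<sigma> i) = dl l i" by (rule trans[OF e1[symmetric] e2])
          thus "\<sigma> i = id i" by (simp only: dl_inj id_apply)
        qed
        have "\<sigma> \<in> P" using \<open>\<sigma> \<in> ?X\<close> by blast
        hence "\<sigma> = id" using uniq[OF _ idP ai] by blast
        thus "\<sigma> \<in> {id}" by simp
      qed
      show "{id} \<subseteq> ?X" using idP eq by auto
    qed
    show ?thesis unfolding G X using True by simp
  next
    case False
    have "?X = {}"
    proof (rule ccontr)
      assume "?X \<noteq> {}"
      then obtain \<sigma> where s: "\<sigma> \<in> P" "\<forall>i\<in>A. \<beta> i = dl l (\<sigma> i)" by auto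
      have "\<beta> ` A = (\<lambda>i. dl l (\<sigma> i)) ` A" using s(2) by (intro image_cong) auto
      hence "\<beta> ` A = dl l ` (\<sigma> ` A)" by (simp add: image_image)
      thus False using False img[OF s(1)] by simp
    qed
    show ?thesis unfolding G \<open>?X = {}\<close> using False by simp
  qed
next
  case (insert c U)
  have inj: "inj_on \<beta> A" using insert.prems(2) by (rule sorted_inj)
  let ?B = "dl l ` A"
  let ?m = "card U"
  have c1: "card c = 1" using insert.prems by simp
  have "GG l A P \<beta> (insert c U) = (\<Sum>i\<in>A. GG l A P (\<beta>(i := \<beta> i - int 1)) U)"
    using GG_insert[OF insert.hyps(1,2) finA] c1 by simp
  also have "\<dots> = (\<Sum>i\<in>A. if inj_on (\<beta>(i := \<beta> i - int 1)) A then int (Q ?B ((\<beta>(i := \<beta> i - int 1)) ` A) ?m) else 0)"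
  proof (intro sum.cong refl)
    fix i assume i: "i \<in> A"
    show "GG l A P (\<beta>(i := \<beta> i - int 1)) U = (if inj_on (\<beta>(i := \<beta> i - int 1)) A then int (Q ?B ((\<beta>(i := \<beta> i - int 1)) ` A) ?m) else 0)"
    proof (cases "inj_on (\<beta>(i := \<beta> i - int 1)) A")
      case True
      have "\<forall>a\<in>A. \<forall>b\<in>A. a < b \<longrightarrow> (\<beta>(i := \<beta> i - int 1)) b < (\<beta>(i := \<beta> i - int 1)) a"
      proof (intro ballI impI)
        fix a b assume ab: "a \<in> A" "b \<in> A" "a < b"
        have "\<beta> b < \<beta> a" using insert.prems(2) ab by auto
        moreover have "a = i \<Longrightarrow> \<beta> b \<noteq> \<beta> i - 1"
          using True ab i unfolding inj_on_def by (metis fun_upd_apply less_irrefl of_nat_1)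
        ultimately show "(\<beta>(i := \<beta> i - int 1)) b < (\<beta>(i := \<beta> i - int 1)) a"
          using ab by auto
      qed
      then show ?thesis using insert.IH insert.prems True by simp
    next
      case False
      then show ?thesis using GG_noninj[OF False finA insert.hyps(1) perm clos] by simp
    qed
  qed
  also have "\<dots> = (\<Sum>x\<in>\<beta> ` A. if x - 1 \<notin> \<beta> ` A then int (Q ?B (insert (x - 1) (\<beta> ` A - {x})) ?m) else 0)"
    using REIDX[OF finA inj, of 1 "\<lambda>V. int (Q ?B V ?m)"] unfolding of_nat_1 by simp
  also have "\<dots> = (\<Sum>x\<in>{x\<in>\<beta> ` A. x - 1 \<notin> \<beta> ` A}. int (Q ?B (insert (x - 1) (\<beta> ` A - {x})) ?m))"
    using finA by (simp add: sum.inter_filter)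
  also have "\<dots> = int (\<Sum>x\<in>{x\<in>\<beta> ` A. x - 1 \<notin> \<beta> ` A}. Q ?B (insert (x - 1) (\<beta> ` A - {x})) ?m)"
    by (simp add: of_nat_sum)
  also have "\<dots> = int (Q ?B (\<beta> ` A) (card (insert c U)))"
    using insert.hyps by simp
  finally show ?case .
qed

lemma cycles_facts:
  assumes "\<pi> permutes {..<n}"
  shows "finite (cycles_of n \<pi>)"
    and "\<And>c. c \<in> cycles_of n \<pi> \<Longrightarrow> finite c \<and> card c \<ge> 1 \<and> c \<subseteq> {..<n}"
    and "(\<Sum>c\<in>cycles_of n \<pi>. card c) = n"
proof -
  have perm: "permutation \<pi>" using assms by (rule permutes_imp_permutation[OF finite_lessThan])
  have self: "\<And>x. x \<in> orbit \<pi> x" by (rule permutation_self_in_orbit[OF perm])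
  show fin: "finite (cycles_of n \<pi>)" unfolding cycles_of_def by simp
  show el: "\<And>c. c \<in> cycles_of n \<pi> \<Longrightarrow> finite c \<and> card c \<ge> 1 \<and> c \<subseteq> {..<n}"
  proof -
    fix c assume "c \<in> cycles_of n \<pi>"
    then obtain x where x: "x < n" "c = orbit \<pi> x" unfolding cycles_of_def by auto
    have f: "finite c" using finite_orbit[OF self] x by simp
    moreover have "c \<noteq> {}" using self x by auto
    hence "card c \<ge> 1" using f by (simp add: Suc_leI card_gt_0_iff)
    moreover have "c \<subseteq> {..<n}" using permutes_orbit_subset[OF assms] x by simp
    ultimately show "finite c \<and> card c \<ge> 1 \<and> c \<subseteq> {..<n}" by simp
  qed
  have U: "\<Union>(cycles_of n \<pi>) = {..<n}"
  proof
    show "\<Union>(cycles_of n \<pi>) \<subseteq> {..<n}" using el by blast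
    show "{..<n} \<subseteq> \<Union>(cycles_of n \<pi>)" unfolding cycles_of_def using self by blast
  qed
  have disj: "pairwise disjnt (cycles_of n \<pi>)"
  proof (rule pairwiseI)
    fix c d assume c: "c \<in> cycles_of n \<pi>" and d: "d \<in> cycles_of n \<pi>" and cd: "c \<noteq> d"
    obtain x where x: "c = orbit \<pi> x" using c unfolding cycles_of_def by auto
    obtain y where y: "d = orbit \<pi> y" using d unfolding cycles_of_def by auto
    show "disjnt c d"
    proof (rule ccontr)
      assume "\<not> disjnt c d"
      then obtain z where z: "z \<in> orbit \<pi> x" "z \<in> orbit \<pi> y" using x y by (auto simp: disjnt_def)
      have "orbit \<pi> z = orbit \<pi> x" by (rule orbit_cyclic_eq3[OF cyclic_on_orbit'[OF perm] z(1)])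
      moreover have "orbit \<pi> z = orbit \<pi> y" by (rule orbit_cyclic_eq3[OF cyclic_on_orbit'[OF perm] z(2)])
      ultimately show False using cd x y by simp
    qed
  qed
  have "card (\<Union>(cycles_of n \<pi>)) = (\<Sum>c\<in>cycles_of n \<pi>. card c)"
    by (rule card_Union_disjoint[OF disj]) (use el in blast)
  thus "(\<Sum>c\<in>cycles_of n \<pi>. card c) = n" using U by simp
qed

lemma cycles_id: "cycles_of n id = (\<lambda>x. {x}) ` {..<n}"
proof -
  have "Orbits.orbit id = (\<lambda>x::nat. {x})" by (rule ext) (simp add: orbit_eq_singleton_iff)
  thus ?thesis unfolding cycles_of_def by simp
qed

lemma frob_NN: "frob_count Cs l \<alpha> = NN Cs {..<l} \<alpha>"
  unfolding frob_count_def NN_def by (simp only: Ball_def lessThan_iff)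

lemma sum_split0:
  assumes "(l::nat) \<ge> 1"
  shows "(\<Sum>i\<in>{..<l}. g i) = g 0 + (\<Sum>i\<in>{1..<l}. g i)"
proof -
  have e: "{..<l} = insert 0 {1..<l}" using assms by auto
  show ?thesis unfolding e by simp
qed

lemma NN_split:
  assumes "finite Cs" "l \<ge> 1"
  shows "NN Cs {..<l} \<alpha> = (\<Sum>T\<in>Pow Cs. if int (\<Sum>c\<in>T. card c) = \<alpha> 0 then NN (Cs - T) {1..<l} \<alpha> else 0)"
  using assms(1)
proof (induction Cs arbitrary: \<alpha> rule: finite_induct)
  case empty
  have e: "{..<l} = insert 0 {1..<l}" using assms(2) by auto
  show ?case unfolding e by (auto simp: NN_empty)
next
  case (insert c U)
  let ?A = "{1..<l}"
  let ?r = "int (card c)"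
  have e: "{..<l} = insert 0 ?A" using assms(2) by auto
  have finA: "finite ?A" by simp
  have LHS: "NN (insert c U) {..<l} \<alpha> = NN U {..<l} (\<alpha>(0 := \<alpha> 0 - ?r)) + (\<Sum>i\<in>?A. NN U {..<l} (\<alpha>(i := \<alpha> i - ?r)))"
    unfolding NN_insert[OF insert.hyps(1,2) finite_lessThan] using sum_split0[OF assms(2), of "\<lambda>i. NN U {..<l} (\<alpha>(i := \<alpha> i - ?r))"] by simp
  have s1: "NN U {..<l} (\<alpha>(0 := \<alpha> 0 - ?r)) =
     (\<Sum>T\<in>Pow U. if int (\<Sum>c\<in>insert c T. card c) = \<alpha> 0 then NN (insert c U - insert c T) ?A \<alpha> else 0)"
  proof -
    have "NN U {..<l} (\<alpha>(0 := \<alpha> 0 - ?r)) =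
      (\<Sum>T\<in>Pow U. if int (\<Sum>c\<in>T. card c) = (\<alpha>(0 := \<alpha> 0 - ?r)) 0 then NN (U - T) ?A (\<alpha>(0 := \<alpha> 0 - ?r)) else 0)"
      by (rule insert.IH)
    also have "\<dots> = (\<Sum>T\<in>Pow U. if int (\<Sum>c\<in>insert c T. card c) = \<alpha> 0 then NN (insert c U - insert c T) ?A \<alpha> else 0)"
    proof (intro sum.cong refl)
      fix T assume T: "T \<in> Pow U"
      have fT: "finite T" using T insert.hyps(1) finite_subset by auto
      have cT: "c \<notin> T" using T insert.hyps(2) by auto
      have "insert c U - insert c T = U - T" using cT insert.hyps(2) by auto
      moreover have "(\<Sum>c\<in>insert c T. card c) = card c + (\<Sum>c\<in>T. card c)" using fT cT by simp
      moreover have "NN (U - T) ?A (\<alpha>(0 := \<alpha> 0 - ?r)) = NN (U - T) ?A \<alpha>" by (rule NN_cong) auto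
      ultimately show "(if int (\<Sum>c\<in>T. card c) = (\<alpha>(0 := \<alpha> 0 - ?r)) 0 then NN (U - T) ?A (\<alpha>(0 := \<alpha> 0 - ?r)) else 0) =
        (if int (\<Sum>c\<in>insert c T. card c) = \<alpha> 0 then NN (insert c U - insert c T) ?A \<alpha> else 0)"
        by auto
    qed
    finally show ?thesis .
  qed
  have s2: "(\<Sum>i\<in>?A. NN U {..<l} (\<alpha>(i := \<alpha> i - ?r))) =
     (\<Sum>T\<in>Pow U. if int (\<Sum>c\<in>T. card c) = \<alpha> 0 then NN (insert c U - T) ?A \<alpha> else 0)"
  proof -
    have "(\<Sum>i\<in>?A. NN U {..<l} (\<alpha>(i := \<alpha> i - ?r))) =
      (\<Sum>i\<in>?A. \<Sum>T\<in>Pow U. if int (\<Sum>c\<in>T. card c) = \<alpha> 0 then NN (U - T) ?A (\<alpha>(i := \<alpha> i - ?r)) else 0)"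
    proof (intro sum.cong refl)
      fix i assume i: "i \<in> ?A"
      show "NN U {..<l} (\<alpha>(i := \<alpha> i - ?r)) =
        (\<Sum>T\<in>Pow U. if int (\<Sum>c\<in>T. card c) = \<alpha> 0 then NN (U - T) ?A (\<alpha>(i := \<alpha> i - ?r)) else 0)"
      proof -
        have h0: "(\<alpha>(i := \<alpha> i - ?r)) 0 = \<alpha> 0" using i by simp
        show ?thesis using insert.IH[of "\<alpha>(i := \<alpha> i - ?r)"] unfolding h0 .
      qed
    qed
    also have "\<dots> = (\<Sum>T\<in>Pow U. \<Sum>i\<in>?A. if int (\<Sum>c\<in>T. card c) = \<alpha> 0 then NN (U - T) ?A (\<alpha>(i := \<alpha> i - ?r)) else 0)"
      by (rule sum.swap)
    also have "\<dots> = (\<Sum>T\<in>Pow U. if int (\<Sum>c\<in>T. card c) = \<alpha> 0 then NN (insert c U - T) ?A \<alpha> else 0)"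
    proof (intro sum.cong refl)
      fix T assume T: "T \<in> Pow U"
      have fT: "finite (U - T)" using insert.hyps(1) by auto
      have "insert c U - T = insert c (U - T)" using T insert.hyps(2) by auto
      hence "NN (insert c U - T) ?A \<alpha> = (\<Sum>i\<in>?A. NN (U - T) ?A (\<alpha>(i := \<alpha> i - ?r)))"
        using NN_insert[OF fT _ finA, of c] insert.hyps(2) by simp
      thus "(\<Sum>i\<in>?A. if int (\<Sum>c\<in>T. card c) = \<alpha> 0 then NN (U - T) ?A (\<alpha>(i := \<alpha> i - ?r)) else 0) =
        (if int (\<Sum>c\<in>T. card c) = \<alpha> 0 then NN (insert c U - T) ?A \<alpha> else 0)" by simp
    qed
    finally show ?thesis .
  qed
  define F where "F = (\<lambda>T. if int (\<Sum>c\<in>T. card c) = \<alpha> 0 then NN (insert c U - T) ?A \<alpha> else 0)"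
  have d1: "\<And>T. T \<in> Pow U \<Longrightarrow> c \<notin> T" using insert.hyps(2) by blast
  have disj: "Pow U \<inter> insert c ` Pow U = {}"
  proof (rule equals0I)
    fix T assume "T \<in> Pow U \<inter> insert c ` Pow U"
    then obtain T' where "T \<in> Pow U" "T = insert c T'" by blast
    thus False using d1 by blast
  qed
  have inj: "inj_on (insert c) (Pow U)"
  proof (rule inj_onI)
    fix X Y assume "X \<in> Pow U" "Y \<in> Pow U" "insert c X = insert c Y"
    thus "X = Y" using d1 insert_ident by metis
  qed
  have RHS: "(\<Sum>T\<in>Pow (insert c U). F T) = (\<Sum>T\<in>Pow U. F T) + (\<Sum>T\<in>Pow U. F (insert c T))"
  proof -
    have "(\<Sum>T\<in>Pow (insert c U). F T) = (\<Sum>T\<in>Pow U. F T) + (\<Sum>T\<in>insert c ` Pow U. F T)"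
      unfolding Pow_insert by (rule sum.union_disjoint) (use insert.hyps(1) disj in auto)
    also have "(\<Sum>T\<in>insert c ` Pow U. F T) = (\<Sum>T\<in>Pow U. F (insert c T))"
      using sum.reindex[OF inj, of F] by (simp add: comp_def)
    finally show ?thesis .
  qed
  have "NN (insert c U) {..<l} \<alpha> = (\<Sum>T\<in>Pow U. F T) + (\<Sum>T\<in>Pow U. F (insert c T))"
    using LHS s1 s2 unfolding F_def by linarith
  thus ?case using RHS unfolding F_def by simp
qed

definition Pk :: "nat \<Rightarrow> nat \<Rightarrow> (nat \<Rightarrow> nat) set" where
  "Pk l k = {\<sigma>. \<sigma> permutes {..<l} \<and> \<sigma> 0 = k}"

lemma Pk_props:
  assumes "k < l"
  shows "finite (Pk l k)"
    and "\<And>\<sigma>. \<sigma> \<in> Pk l k \<Longrightarrow> permutation \<sigma>"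
    and "\<And>a b \<sigma>. a \<in> {1..<l} \<Longrightarrow> b \<in> {1..<l} \<Longrightarrow> \<sigma> \<in> Pk l k \<Longrightarrow> \<sigma> \<circ> Transposition.transpose a b \<in> Pk l k"
    and "\<And>\<sigma> \<sigma>'. \<sigma> \<in> Pk l k \<Longrightarrow> \<sigma>' \<in> Pk l k \<Longrightarrow> (\<forall>i\<in>{1..<l}. \<sigma> i = \<sigma>' i) \<Longrightarrow> \<sigma> = \<sigma>'"
    and "\<And>\<sigma>. \<sigma> \<in> Pk l k \<Longrightarrow> \<sigma> ` {1..<l} = {..<l} - {k}"
proof -
  show "finite (Pk l k)" unfolding Pk_def
    by (rule finite_subset[OF _ finite_permutations[OF finite_lessThan[of l]]]) auto
  show "\<And>\<sigma>. \<sigma> \<in> Pk l k \<Longrightarrow> permutation \<sigma>"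
    unfolding Pk_def by (auto intro: permutes_imp_permutation)
  show "\<And>a b \<sigma>. a \<in> {1..<l} \<Longrightarrow> b \<in> {1..<l} \<Longrightarrow> \<sigma> \<in> Pk l k \<Longrightarrow> \<sigma> \<circ> Transposition.transpose a b \<in> Pk l k"
  proof -
    fix a b \<sigma> assume ab: "a \<in> {1..<l}" "b \<in> {1..<l}" and s: "\<sigma> \<in> Pk l k"
    have "Transposition.transpose a b permutes {..<l}" using ab by (intro permutes_swap_id) auto
    hence "\<sigma> \<circ> Transposition.transpose a b permutes {..<l}"
      using s unfolding Pk_def by (auto intro: permutes_compose)
    moreover have "(\<sigma> \<circ> Transposition.transpose a b) 0 = k" using ab s unfolding Pk_def by auto
    ultimately show "\<sigma> \<circ> Transposition.transpose a b \<in> Pk l k" unfolding Pk_def by auto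
  qed
  show "\<And>\<sigma> \<sigma>'. \<sigma> \<in> Pk l k \<Longrightarrow> \<sigma>' \<in> Pk l k \<Longrightarrow> (\<forall>i\<in>{1..<l}. \<sigma> i = \<sigma>' i) \<Longrightarrow> \<sigma> = \<sigma>'"
  proof
    fix \<sigma> \<sigma>' x assume s: "\<sigma> \<in> Pk l k" "\<sigma>' \<in> Pk l k" and e: "\<forall>i\<in>{1..<l}. \<sigma> i = \<sigma>' i"
    show "\<sigma> x = \<sigma>' x"
    proof (cases "x < l")
      case True
      then show ?thesis using s e unfolding Pk_def by (cases "x = 0") auto
    next
      case False
      have p1: "\<sigma> permutes {..<l}" and p2: "\<sigma>' permutes {..<l}" using s unfolding Pk_def by auto
      have "\<sigma> x = x" by (rule permutes_not_in[OF p1]) (use False in simp)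
      moreover have "\<sigma>' x = x" by (rule permutes_not_in[OF p2]) (use False in simp)
      ultimately show ?thesis by simp
    qed
  qed
  show "\<And>\<sigma>. \<sigma> \<in> Pk l k \<Longrightarrow> \<sigma> ` {1..<l} = {..<l} - {k}"
  proof -
    fix \<sigma> assume s: "\<sigma> \<in> Pk l k"
    have p: "\<sigma> permutes {..<l}" and s0: "\<sigma> 0 = k" using s unfolding Pk_def by auto
    have e: "{1..<l} = {..<l} - {0}" by auto
    have "\<sigma> ` ({..<l} - {0}) = \<sigma> ` {..<l} - {\<sigma> 0}"
      using image_set_diff[OF permutes_inj[OF p], of "{..<l}" "{0}"] by simp
    thus "\<sigma> ` {1..<l} = {..<l} - {k}" unfolding e permutes_image[OF p] s0 .
  qed
qed

lemma Perm_props: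
  fixes l :: nat
  shows "finite {\<sigma>. \<sigma> permutes {..<l}}"
    and "\<And>\<sigma>. \<sigma> \<in> {\<sigma>. \<sigma> permutes {..<l}} \<Longrightarrow> permutation \<sigma>"
    and "\<And>a b \<sigma>. a \<in> {..<l} \<Longrightarrow> b \<in> {..<l} \<Longrightarrow> \<sigma> \<in> {\<sigma>. \<sigma> permutes {..<l}} \<Longrightarrow> \<sigma> \<circ> Transposition.transpose a b \<in> {\<sigma>. \<sigma> permutes {..<l}}"
    and "\<And>\<sigma> \<sigma>'. \<sigma> \<in> {\<sigma>. \<sigma> permutes {..<l}} \<Longrightarrow> \<sigma>' \<in> {\<sigma>. \<sigma> permutes {..<l}} \<Longrightarrow> (\<forall>i\<in>{..<l}. \<sigma> i = \<sigma>' i) \<Longrightarrow> \<sigma> = \<sigma>'"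
    and "\<And>\<sigma>. \<sigma> \<in> {\<sigma>. \<sigma> permutes {..<l}} \<Longrightarrow> \<sigma> ` {..<l} = {..<l}"
    and "id \<in> {\<sigma>. \<sigma> permutes {..<l}}"
proof -
  show "finite {\<sigma>. \<sigma> permutes {..<l}}" by (rule finite_permutations[OF finite_lessThan])
  show "\<And>\<sigma>. \<sigma> \<in> {\<sigma>. \<sigma> permutes {..<l}} \<Longrightarrow> permutation \<sigma>" by (auto intro: permutes_imp_permutation)
  show "\<And>a b \<sigma>. a \<in> {..<l} \<Longrightarrow> b \<in> {..<l} \<Longrightarrow> \<sigma> \<in> {\<sigma>. \<sigma> permutes {..<l}} \<Longrightarrow> \<sigma> \<circ> Transposition.transpose a b \<in> {\<sigma>. \<sigma> permutes {..<l}}"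
    by (auto intro: permutes_compose permutes_swap_id)
  show "\<And>\<sigma> \<sigma>'. \<sigma> \<in> {\<sigma>. \<sigma> permutes {..<l}} \<Longrightarrow> \<sigma>' \<in> {\<sigma>. \<sigma> permutes {..<l}} \<Longrightarrow> (\<forall>i\<in>{..<l}. \<sigma> i = \<sigma>' i) \<Longrightarrow> \<sigma> = \<sigma>'"
  proof
    fix \<sigma> \<sigma>' x assume s: "\<sigma> \<in> {\<sigma>. \<sigma> permutes {..<l}}" "\<sigma>' \<in> {\<sigma>. \<sigma> permutes {..<l}}" and e: "\<forall>i\<in>{..<l}. \<sigma> i = \<sigma>' i"
    show "\<sigma> x = \<sigma>' x"
      using s e by (cases "x < l") (auto simp: permutes_not_in)
  qed
  show "\<And>\<sigma>. \<sigma> \<in> {\<sigma>. \<sigma> permutes {..<l}} \<Longrightarrow> \<sigma> ` {..<l} = {..<l}" by (auto simp: permutes_image)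
  show "id \<in> {\<sigma>. \<sigma> permutes {..<l}}" by (simp add: permutes_id)
qed

lemma path_lemma:
  assumes "k < l"
  shows "Q (dl l ` {1..<l}) (dl l ` ({..<l} - {k})) k \<ge> 1"
  using assms
proof (induction k)
  case 0
  have "{..<l} - {0} = {1..<l}" by auto
  then show ?case by simp
next
  case (Suc k)
  let ?B = "dl l ` ({..<l} - {Suc k})"
  let ?x = "dl l k"
  have fin: "finite ?B" by simp
  have x1: "?x \<in> ?B" using Suc.prems by auto
  have x2: "?x - 1 \<notin> ?B"
  proof
    assume "?x - 1 \<in> ?B"
    then obtain j where j: "j \<in> {..<l} - {Suc k}" "dl l k - 1 = dl l j" by auto
    hence "dl l j = dl l (Suc k)" unfolding dl_def by simp
    thus False using j(1) by (simp add: dl_inj)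
  qed
  have e: "insert (?x - 1) (?B - {?x}) = dl l ` ({..<l} - {k})"
  proof -
    have "?x - 1 = dl l (Suc k)" unfolding dl_def by simp
    moreover have "?B - {?x} = dl l ` ({..<l} - {Suc k} - {k})"
      by (auto simp: dl_inj image_iff)
    ultimately show ?thesis using Suc.prems by auto
  qed
  have "Q (dl l ` {1..<l}) ?B (Suc k) = (\<Sum>y\<in>{y\<in>?B. y - 1 \<notin> ?B}. Q (dl l ` {1..<l}) (insert (y - 1) (?B - {y})) k)"
    by simp
  also have "\<dots> \<ge> Q (dl l ` {1..<l}) (insert (?x - 1) (?B - {?x})) k"
    by (rule member_le_sum) (use fin x1 x2 in auto)
  finally have "Q (dl l ` {1..<l}) ?B (Suc k) \<ge> Q (dl l ` {1..<l}) (dl l ` ({..<l} - {k})) k" unfolding e .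
  moreover have "Q (dl l ` {1..<l}) (dl l ` ({..<l} - {k})) k \<ge> 1" using Suc by simp
  ultimately show ?case by linarith
qed

lemma tot_ge_card:
  assumes "finite U" "\<forall>c\<in>U. card c \<ge> 1"
  shows "card U \<le> (\<Sum>c\<in>U. card c)"
proof -
  have "card U = (\<Sum>c\<in>U. 1)" by simp
  also have "\<dots> \<le> (\<Sum>c\<in>U. card c)" by (rule sum_mono) (use assms in auto)
  finally show ?thesis .
qed

lemma tot_ge_card_elem:
  assumes "finite U" "\<forall>c\<in>U. card c \<ge> 1" "x \<in> U"
  shows "card x + card U \<le> (\<Sum>c\<in>U. card c) + 1"
proof -
  have "(\<Sum>c\<in>U. card c) = card x + (\<Sum>c\<in>U - {x}. card c)"
    using assms by (simp add: sum.remove)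
  moreover have "card (U - {x}) \<le> (\<Sum>c\<in>U - {x}. card c)"
    by (rule tot_ge_card) (use assms in auto)
  moreover have "card (U - {x}) + 1 = card U" using assms
    by (metis One_nat_def Suc_pred add.right_neutral add_Suc_right card.remove card_gt_0_iff empty_iff)
  ultimately show ?thesis by linarith
qed

lemma character_expand:
  assumes "sum_list lam = n"
  shows "character lam \<pi> = (\<Sum>\<sigma>\<in>{\<sigma>. \<sigma> permutes {..<length lam}}.
     sign \<sigma> * int (NN (cycles_of n \<pi>) {..<length lam} (\<lambda>i. int (lam ! i) + dl (length lam) i - dl (length lam) (\<sigma> i))))"
  unfolding character_def Let_def frob_NN dl_def assms ..

lemma Suc_img: "(l::nat) \<ge> 1 \<Longrightarrow> {1..<l} = Suc ` {..<l - 1}"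
proof -
  assume "l \<ge> 1"
  show ?thesis
  proof
    show "{1..<l} \<subseteq> Suc ` {..<l - 1}"
    proof
      fix x assume x: "x \<in> {1..<l}"
      hence "x = Suc (x - 1)" "x - 1 < l - 1" by auto
      thus "x \<in> Suc ` {..<l - 1}" by blast
    qed
    show "Suc ` {..<l - 1} \<subseteq> {1..<l}" by auto
  qed
qed

lemma main_bound:
  assumes part: "is_partition lam n" and ne: "lam \<noteq> []" and perm: "\<pi> permutes {..<n}"
  shows "\<bar>character lam \<pi> - character (tl lam) id * int (cyc_count n \<pi> 1 choose sum_list (tl lam))\<bar>
     \<le> character (tl lam) id * int (\<Sum>j=1..sum_list (tl lam). (\<Sum>i=1..j+1. cyc_count n \<pi> i) choose (sum_list (tl lam) - j))"
proof -
  define l where "l = length lam"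
  define \<mu> where "\<mu> = tl lam"
  define \<Delta> where "\<Delta> = sum_list \<mu>"
  define Cs where "Cs = cycles_of n \<pi>"
  define \<beta> where "\<beta> = (\<lambda>i. int (lam ! i) + dl l i)"
  define A' where "A' = {1..<l}"
  define tot where "tot = (\<lambda>U::nat set set. \<Sum>c\<in>U. card c)"
  have l1: "l \<ge> 1" using ne l_def by (cases lam) auto
  have sl: "sum_list lam = n" using part unfolding is_partition_def by simp
  have nsplit: "n = lam ! 0 + \<Delta>" using ne sl unfolding \<Delta>_def \<mu>_def by (cases lam) auto
  have finCs: "finite Cs" and cCs: "\<And>c. c \<in> Cs \<Longrightarrow> finite c \<and> card c \<ge> 1 \<and> c \<subseteq> {..<n}"
    and totCs: "tot Cs = n"
    using cycles_facts[OF perm] unfolding Cs_def tot_def by auto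
  have sortedl: "\<And>i j. i < j \<Longrightarrow> j < l \<Longrightarrow> lam ! j \<le> lam ! i"
    using part unfolding is_partition_def l_def by (metis sorted_wrt_nth_less)
  have sortedb: "\<forall>i\<in>A'. \<forall>j\<in>A'. i < j \<longrightarrow> \<beta> j < \<beta> i"
  proof (intro ballI impI)
    fix i j assume "i \<in> A'" "j \<in> A'" "i < j"
    hence "lam ! j \<le> lam ! i" "j < l" using sortedl unfolding A'_def by auto
    thus "\<beta> j < \<beta> i" unfolding \<beta>_def dl_def using \<open>i < j\<close> by simp
  qed
  have injb: "inj_on \<beta> A'" by (rule sorted_inj[OF sortedb])
  define V where "V = \<beta> ` A'"
  define B0 where "B0 = dl l ` A'"
  define D where "D = Q B0 V \<Delta>"
  have finA: "finite A'" unfolding A'_def by simp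
  have A'e: "{..<l} - {0} = A'" unfolding A'_def by auto

  have d_eq: "character \<mu> id = int D"
  proof -
    define l' where "l' = length \<mu>"
    have l'e: "l' = l - 1" unfolding l'_def \<mu>_def l_def by simp
    define \<beta>' where "\<beta>' = (\<lambda>i. int (\<mu> ! i) + dl l' i)"
    have Cs': "cycles_of \<Delta> id = (\<lambda>x. {x}) ` {..<\<Delta>}" by (rule cycles_id)
    have cardCs': "card (cycles_of \<Delta> id) = \<Delta>" unfolding Cs'
      by (subst card_image) (auto simp: inj_on_def)
    have sortedb': "\<forall>i\<in>{..<l'}. \<forall>j\<in>{..<l'}. i < j \<longrightarrow> \<beta>' j < \<beta>' i"
    proof (intro ballI impI)
      fix i j assume ij: "i \<in> {..<l'}" "j \<in> {..<l'}" "i < j"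
      have "\<mu> ! i = lam ! Suc i" "\<mu> ! j = lam ! Suc j" using ij unfolding \<mu>_def l'_def by (auto simp: nth_tl)
      moreover have "lam ! Suc j \<le> lam ! Suc i" using sortedl ij l'e by auto
      ultimately show "\<beta>' j < \<beta>' i" unfolding \<beta>'_def dl_def using ij by simp
    qed
    have "character \<mu> id = GG l' {..<l'} {\<sigma>. \<sigma> permutes {..<l'}} \<beta>' (cycles_of \<Delta> id)"
      unfolding character_expand[of \<mu> \<Delta> id, OF \<Delta>_def[symmetric]] GG_def \<beta>'_def l'_def by simp
    also have "\<dots> = int (Q (dl l' ` {..<l'}) (\<beta>' ` {..<l'}) (card (cycles_of \<Delta> id)))"
      by (rule GG_sorted[OF finite_lessThan Perm_props(1-6)]) (use Cs' sortedb' in auto)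
    also have "dl l' ` {..<l'} = B0"
    proof -
      have "dl l' ` {..<l'} = (\<lambda>i. dl l (Suc i)) ` {..<l'}"
        by (intro image_cong refl) (use l1 l'e in \<open>simp add: dl_def of_nat_diff\<close>)
      also have "\<dots> = dl l ` (Suc ` {..<l'})" by (simp add: image_image)
      finally show ?thesis unfolding B0_def A'_def Suc_img[OF l1] l'e .
    qed
    also have "\<beta>' ` {..<l'} = V"
    proof -
      have "\<beta>' ` {..<l'} = (\<lambda>i. \<beta> (Suc i)) ` {..<l'}"
        by (intro image_cong refl) (use l1 l'e in \<open>simp add: \<beta>'_def \<beta>_def dl_def of_nat_diff \<mu>_def l'_def nth_tl\<close>)
      also have "\<dots> = \<beta> ` (Suc ` {..<l'})" by (simp add: image_image)
      finally show ?thesis unfolding V_def A'_def Suc_img[OF l1] l'e .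
    qed
    finally show ?thesis unfolding D_def cardCs' .
  qed

  define \<alpha> where "\<alpha> = (\<lambda>\<sigma> i. \<beta> i - dl l (\<sigma> i))"
  define Perm where "Perm = {\<sigma>. \<sigma> permutes {..<l}}"
  have finPerm: "finite Perm" unfolding Perm_def by (rule Perm_props(1))
  have ch1: "character lam \<pi> = (\<Sum>\<sigma>\<in>Perm. sign \<sigma> * int (NN Cs {..<l} (\<alpha> \<sigma>)))"
    unfolding character_expand[OF sl] Perm_def Cs_def \<alpha>_def \<beta>_def l_def by simp
  have nn: "NN Cs {..<l} (\<alpha> \<sigma>) = (\<Sum>U\<in>Pow Cs. if tot U + \<sigma> 0 = \<Delta> then NN U A' (\<alpha> \<sigma>) else 0)"
    if s: "\<sigma> \<in> Perm" for \<sigma>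
  proof -
    have "NN Cs {..<l} (\<alpha> \<sigma>) = (\<Sum>T\<in>Pow Cs. if int (tot T) = \<alpha> \<sigma> 0 then NN (Cs - T) A' (\<alpha> \<sigma>) else 0)"
      unfolding tot_def A'_def by (rule NN_split[OF finCs l1])
    also have "\<dots> = (\<Sum>U\<in>Pow Cs. if int (tot (Cs - U)) = \<alpha> \<sigma> 0 then NN (Cs - (Cs - U)) A' (\<alpha> \<sigma>) else 0)"
      by (rule sum.reindex_bij_witness[where i="\<lambda>U. Cs - U" and j="\<lambda>U. Cs - U"]) (auto simp: Diff_Diff_Int Int_absorb1)
    also have "\<dots> = (\<Sum>U\<in>Pow Cs. if tot U + \<sigma> 0 = \<Delta> then NN U A' (\<alpha> \<sigma>) else 0)"
    proof (intro sum.cong refl)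
      fix U assume U: "U \<in> Pow Cs"
      have fU: "finite U" using U finCs finite_subset by auto
      have t: "tot (Cs - U) = n - tot U" using sum_diff_nat[OF fU, of Cs card] U totCs unfolding tot_def by auto
      have tle: "tot U \<le> n" using totCs U finCs unfolding tot_def by (metis PowD sum_mono2 zero_le)
      have a0: "\<alpha> \<sigma> 0 = int (lam ! 0) + int (\<sigma> 0)" unfolding \<alpha>_def \<beta>_def dl_def by simp
      have "int (tot (Cs - U)) = \<alpha> \<sigma> 0 \<longleftrightarrow> tot U + \<sigma> 0 = \<Delta>" unfolding t a0 using tle nsplit by linarith
      moreover have "Cs - (Cs - U) = U" using U by auto
      ultimately show "(if int (tot (Cs - U)) = \<alpha> \<sigma> 0 then NN (Cs - (Cs - U)) A' (\<alpha> \<sigma>) else 0) =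
         (if tot U + \<sigma> 0 = \<Delta> then NN U A' (\<alpha> \<sigma>) else 0)" by simp
    qed
    finally show ?thesis .
  qed
  have "character lam \<pi> = (\<Sum>\<sigma>\<in>Perm. \<Sum>U\<in>Pow Cs. if tot U + \<sigma> 0 = \<Delta> then sign \<sigma> * int (NN U A' (\<alpha> \<sigma>)) else 0)"
    unfolding ch1
  proof (intro sum.cong refl)
    fix \<sigma> assume s: "\<sigma> \<in> Perm"
    have "sign \<sigma> * int (NN Cs {..<l} (\<alpha> \<sigma>)) = sign \<sigma> * (\<Sum>U\<in>Pow Cs. int (if tot U + \<sigma> 0 = \<Delta> then NN U A' (\<alpha> \<sigma>) else 0))"
      by (simp only: nn[OF s] of_nat_sum)
    also have "\<dots> = (\<Sum>U\<in>Pow Cs. sign \<sigma> * int (if tot U + \<sigma> 0 = \<Delta> then NN U A' (\<alpha> \<sigma>) else 0))"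
      by (rule sum_distrib_left)
    also have "\<dots> = (\<Sum>U\<in>Pow Cs. if tot U + \<sigma> 0 = \<Delta> then sign \<sigma> * int (NN U A' (\<alpha> \<sigma>)) else 0)"
      by (intro sum.cong refl) simp
    finally show "sign \<sigma> * int (NN Cs {..<l} (\<alpha> \<sigma>)) = (\<Sum>U\<in>Pow Cs. if tot U + \<sigma> 0 = \<Delta> then sign \<sigma> * int (NN U A' (\<alpha> \<sigma>)) else 0)" .
  qed
  also have "\<dots> = (\<Sum>U\<in>Pow Cs. \<Sum>\<sigma>\<in>Perm. if tot U + \<sigma> 0 = \<Delta> then sign \<sigma> * int (NN U A' (\<alpha> \<sigma>)) else 0)"
    by (rule sum.swap)
  also have "\<dots> = (\<Sum>U\<in>Pow Cs. \<Sum>k\<in>{..<l}. if tot U + k = \<Delta> then GG l A' (Pk l k) \<beta> U else 0)"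
  proof (intro sum.cong refl)
    fix U
    have "(\<Sum>\<sigma>\<in>Perm. if tot U + \<sigma> 0 = \<Delta> then sign \<sigma> * int (NN U A' (\<alpha> \<sigma>)) else 0)
       = (\<Sum>k\<in>{..<l}. \<Sum>\<sigma>\<in>{x\<in>Perm. x 0 = k}. if tot U + \<sigma> 0 = \<Delta> then sign \<sigma> * int (NN U A' (\<alpha> \<sigma>)) else 0)"
    proof (rule sum.group[symmetric, OF finPerm finite_lessThan])
      show "(\<lambda>x. x 0) ` Perm \<subseteq> {..<l}"
      proof
        fix y assume "y \<in> (\<lambda>x. x 0) ` Perm"
        then obtain x where x: "x \<in> Perm" "y = x 0" by auto
        have "x permutes {..<l}" using x unfolding Perm_def by simp
        thus "y \<in> {..<l}" using permutes_in_image[of x "{..<l}" 0] l1 x(2) by simp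
      qed
    qed
    also have "\<dots> = (\<Sum>k\<in>{..<l}. if tot U + k = \<Delta> then GG l A' (Pk l k) \<beta> U else 0)"
    proof (intro sum.cong refl)
      fix k
      have e: "{x\<in>Perm. x 0 = k} = Pk l k" unfolding Perm_def Pk_def by auto
      show "(\<Sum>\<sigma>\<in>{x\<in>Perm. x 0 = k}. if tot U + \<sigma> 0 = \<Delta> then sign \<sigma> * int (NN U A' (\<alpha> \<sigma>)) else 0) =
        (if tot U + k = \<Delta> then GG l A' (Pk l k) \<beta> U else 0)"
        unfolding e GG_def \<alpha>_def by (cases "tot U + k = \<Delta>") (auto simp: Pk_def intro!: sum.cong)
    qed
    finally show "(\<Sum>\<sigma>\<in>Perm. if tot U + \<sigma> 0 = \<Delta> then sign \<sigma> * int (NN U A' (\<alpha> \<sigma>)) else 0)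
       = (\<Sum>k\<in>{..<l}. if tot U + k = \<Delta> then GG l A' (Pk l k) \<beta> U else 0)" .
  qed
  finally have chS: "character lam \<pi> = (\<Sum>U\<in>Pow Cs. \<Sum>k\<in>{..<l}. if tot U + k = \<Delta> then GG l A' (Pk l k) \<beta> U else 0)" .

  define g where "g = (\<lambda>p::nat set set \<times> nat. GG l A' (Pk l (snd p)) \<beta> (fst p))"
  define Tm where "Tm = {p \<in> Pow Cs \<times> {..<l}. tot (fst p) + snd p = \<Delta>}"
  have finPC: "finite (Pow Cs \<times> {..<l})" using finCs by simp
  have finTm: "finite Tm" unfolding Tm_def using finPC by simp
  have chT: "character lam \<pi> = (\<Sum>p\<in>Tm. g p)"
  proof -
    have "character lam \<pi> = (\<Sum>p\<in>Pow Cs \<times> {..<l}. if tot (fst p) + snd p = \<Delta> then g p else 0)"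
      unfolding chS g_def sum.cartesian_product by (intro sum.cong refl) auto
    also have "\<dots> = (\<Sum>p\<in>Tm. g p)" unfolding Tm_def by (rule sum.inter_filter[symmetric, OF finPC])
    finally show ?thesis .
  qed
  define Fix where "Fix = {c \<in> Cs. card c = 1}"
  define Good where "Good = {U. U \<subseteq> Fix \<and> card U = \<Delta>}"
  define M where "M = (\<lambda>U. (U, 0::nat)) ` Good"
  have finFix: "finite Fix" unfolding Fix_def using finCs by simp
  have cardGood: "card Good = cyc_count n \<pi> 1 choose \<Delta>"
  proof -
    have "card Good = card Fix choose \<Delta>" unfolding Good_def by (rule n_subsets[OF finFix])
    also have "card Fix = cyc_count n \<pi> 1" unfolding Fix_def Cs_def cyc_count_def ..
    finally show ?thesis .
  qed
  have totGood: "tot U = card U" if "U \<in> Good" for U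
  proof -
    have "tot U = (\<Sum>c\<in>U. 1)" unfolding tot_def using that unfolding Good_def Fix_def by (intro sum.cong) auto
    thus ?thesis by simp
  qed
  have MT: "M \<subseteq> Tm"
  proof
    fix p assume "p \<in> M"
    then obtain U where U: "U \<in> Good" "p = (U, 0)" unfolding M_def by auto
    have "U \<subseteq> Cs" using U(1) unfolding Good_def Fix_def by auto
    moreover have "tot U = \<Delta>" using totGood[OF U(1)] U(1) unfolding Good_def by simp
    ultimately show "p \<in> Tm" unfolding Tm_def using U(2) l1 by auto
  qed
  have sorted0: "\<forall>U. U \<in> Good \<longrightarrow> GG l A' (Pk l 0) \<beta> U = int D"
  proof (intro allI impI)
    fix U assume U: "U \<in> Good"
    have k0: "0 < l" using l1 by simp
    have fU: "finite U" using U finFix finite_subset unfolding Good_def by blast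
    have img0: "\<And>\<sigma>. \<sigma> \<in> Pk l 0 \<Longrightarrow> \<sigma> ` A' = A'" using Pk_props(5)[OF k0] A'e unfolding A'_def by simp
    have id0: "id \<in> Pk l 0" unfolding Pk_def by (simp add: permutes_id)
    have "GG l A' (Pk l 0) \<beta> U = int (Q (dl l ` A') (\<beta> ` A') (card U))"
      by (rule GG_sorted[OF finA Pk_props(1-4)[OF k0, folded A'_def] img0 id0 fU _ sortedb])
         (use U in \<open>auto simp: Good_def Fix_def\<close>)
    thus "GG l A' (Pk l 0) \<beta> U = int D" using U unfolding D_def B0_def V_def Good_def by simp
  qed
  have sumM: "(\<Sum>p\<in>M. g p) = int (card Good) * int D"
  proof -
    have "(\<Sum>p\<in>M. g p) = (\<Sum>U\<in>Good. g (U, 0))" unfolding M_def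
      by (rule sum.reindex[unfolded comp_def]) (auto simp: inj_on_def)
    also have "\<dots> = (\<Sum>U\<in>Good. int D)" using sorted0 unfolding g_def by (intro sum.cong refl) auto
    finally show ?thesis by simp
  qed
  have bnd: "\<bar>g p\<bar> \<le> int D" if p: "p \<in> Tm" for p
  proof -
    obtain U k where pk: "p = (U, k)" by (cases p)
    have U: "U \<subseteq> Cs" and k: "k < l" and tk: "tot U + k = \<Delta>" using p pk unfolding Tm_def by auto
    have fU: "finite U" using U finCs finite_subset by auto
    have cU: "\<forall>c\<in>U. card c \<ge> 1" using U cCs by auto
    define Bk where "Bk = dl l ` ({..<l} - {k})"
    have "\<bar>g p\<bar> \<le> (if inj_on \<beta> A' then int (Q Bk V (tot U)) else 0)"
      unfolding pk g_def Bk_def V_def tot_def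
      by (simp only: fst_conv snd_conv)
         (rule GG_bound[OF finA Pk_props(1-5)[OF k, folded A'_def] fU cU])
    hence b1: "\<bar>g p\<bar> \<le> int (Q Bk V (tot U))" using injb by simp
    have "(\<Sum>W\<in>{Bk}. Q W V (tot U) * Q B0 W k) \<le> Q B0 V (tot U + k)"
      by (rule Q_concat) (auto simp: V_def finA)
    hence b2: "Q Bk V (tot U) * Q B0 Bk k \<le> D" unfolding D_def using tk by simp
    have b3: "Q B0 Bk k \<ge> 1" unfolding B0_def Bk_def A'_def by (rule path_lemma[OF k])
    have "Q Bk V (tot U) \<le> D" using b2 b3
      by (metis dual_order.trans le_square mult.right_neutral mult_le_mono2)
    thus ?thesis using b1 by linarith
  qed
  define X where "X = (\<lambda>j. {U. U \<subseteq> {c \<in> Cs. card c \<le> j + 1} \<and> card U = \<Delta> - j})"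
  have cardX: "card (X j) = (\<Sum>i=1..j+1. cyc_count n \<pi> i) choose (\<Delta> - j)" for j
  proof -
    have fin: "finite {c \<in> Cs. card c \<le> j + 1}" using finCs by simp
    have se: "{c \<in> Cs. card c \<le> j + 1} = (\<Union>i\<in>{1..j+1}. {c \<in> Cs. card c = i})"
      using cCs by fastforce
    have "card (\<Union>i\<in>{1..j+1}. {c \<in> Cs. card c = i}) = (\<Sum>i=1..j+1. card {c \<in> Cs. card c = i})"
      by (rule card_UN_disjoint) (use finCs in auto)
    hence "card {c \<in> Cs. card c \<le> j + 1} = (\<Sum>i=1..j+1. card {c \<in> Cs. card c = i})"
      unfolding se .
    also have "\<dots> = (\<Sum>i=1..j+1. cyc_count n \<pi> i)" unfolding cyc_count_def Cs_def ..
    finally show ?thesis unfolding X_def n_subsets[OF fin] by simp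
  qed
  have cnt: "card (Tm - M) \<le> (\<Sum>j=1..\<Delta>. card (X j))"
  proof -
    have sub: "fst ` (Tm - M) \<subseteq> (\<Union>j\<in>{1..\<Delta>}. X j)"
    proof
      fix U assume "U \<in> fst ` (Tm - M)"
      then obtain k where pk: "(U, k) \<in> Tm" "(U, k) \<notin> M" by force
      have U: "U \<subseteq> Cs" and k: "k < l" and tk: "tot U + k = \<Delta>" using pk unfolding Tm_def by auto
      have fU: "finite U" using U finCs finite_subset by auto
      have cU: "\<forall>c\<in>U. card c \<ge> 1" using U cCs by auto
      have cle: "card U \<le> tot U" unfolding tot_def by (rule tot_ge_card[OF fU cU])
      define j where "j = \<Delta> - card U"
      have j1: "j \<ge> 1"
      proof (rule ccontr)
        assume "\<not> j \<ge> 1"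
        hence cU\<Delta>: "card U = \<Delta>" using cle tk unfolding j_def by linarith
        hence k0: "k = 0" and tU: "tot U = card U" using cle tk by linarith+
        have "\<forall>c\<in>U. card c = 1"
        proof
          fix c assume c: "c \<in> U"
          have "card c + card U \<le> tot U + 1" unfolding tot_def by (rule tot_ge_card_elem[OF fU cU c])
          thus "card c = 1" using tU cU c by fastforce
        qed
        hence "U \<in> Good" unfolding Good_def Fix_def using U cU\<Delta> by auto
        hence "(U, k) \<in> M" unfolding M_def k0 by auto
        thus False using pk(2) by simp
      qed
      have jle: "j \<le> \<Delta>" unfolding j_def by simp
      have "\<forall>c\<in>U. card c \<le> j + 1"
      proof
        fix c assume c: "c \<in> U"
        have "card c + card U \<le> tot U + 1" unfolding tot_def by (rule tot_ge_card_elem[OF fU cU c])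
        thus "card c \<le> j + 1" using tk cle unfolding j_def by linarith
      qed
      hence "U \<in> X j" unfolding X_def j_def using U cle tk by auto
      thus "U \<in> (\<Union>j\<in>{1..\<Delta>}. X j)" using j1 jle by auto
    qed
    have inj: "inj_on fst (Tm - M)"
    proof
      fix p q assume "p \<in> Tm - M" "q \<in> Tm - M" "fst p = fst q"
      thus "p = q" unfolding Tm_def by (cases p, cases q) auto
    qed
    have finU: "finite (\<Union>j\<in>{1..\<Delta>}. X j)"
    proof (rule finite_subset)
      show "(\<Union>j\<in>{1..\<Delta>}. X j) \<subseteq> Pow Cs" unfolding X_def by auto
    qed (use finCs in simp)
    have "card (Tm - M) \<le> card (\<Union>j\<in>{1..\<Delta>}. X j)"
      by (rule card_inj_on_le[OF inj sub finU])
    also have "\<dots> \<le> (\<Sum>j=1..\<Delta>. card (X j))" by (rule card_UN_le) simp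
    finally show ?thesis .
  qed
  have split: "(\<Sum>p\<in>Tm. g p) = (\<Sum>p\<in>Tm - M. g p) + (\<Sum>p\<in>M. g p)"
    by (rule sum.subset_diff[OF MT finTm])
  have "\<bar>\<Sum>p\<in>Tm - M. g p\<bar> \<le> (\<Sum>p\<in>Tm - M. \<bar>g p\<bar>)" by (rule sum_abs)
  also have "\<dots> \<le> (\<Sum>p\<in>Tm - M. int D)" by (rule sum_mono) (use bnd in auto)
  also have "\<dots> = int (card (Tm - M)) * int D" by simp
  also have "\<dots> \<le> int (\<Sum>j=1..\<Delta>. card (X j)) * int D"
    by (rule mult_right_mono[OF of_nat_mono[OF cnt]]) simp
  finally have fin_bound: "\<bar>\<Sum>p\<in>Tm - M. g p\<bar> \<le> int (\<Sum>j=1..\<Delta>. card (X j)) * int D" .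
  have "character lam \<pi> - character \<mu> id * int (cyc_count n \<pi> 1 choose \<Delta>) = (\<Sum>p\<in>Tm - M. g p)"
    using chT split sumM d_eq cardGood by (simp add: mult.commute)
  hence "\<bar>character lam \<pi> - character \<mu> id * int (cyc_count n \<pi> 1 choose \<Delta>)\<bar>
      \<le> character \<mu> id * int (\<Sum>j=1..\<Delta>. (\<Sum>i=1..j+1. cyc_count n \<pi> i) choose (\<Delta> - j))"
    using fin_bound d_eq cardX by (simp add: mult.commute)
  thus ?thesis unfolding \<mu>_def \<Delta>_def .
qed

theorem lemma2p2:
  shows "\<exists>C::real. C > 0 \<and>
    (\<forall>n lam \<pi>. is_partition lam n \<longrightarrow> lam \<noteq> [] \<longrightarrow> \<pi> permutes {..<n} \<longrightarrow>
      (let \<mu> = tl lam; \<Delta> = sum_list \<mu>; c = cyc_count n \<pi>;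
           d = real_of_int (character \<mu> id) in
       \<bar>real_of_int (character lam \<pi>) - d * real (c 1 choose \<Delta>)\<bar>
         \<le> C * d * (\<Sum>j=1..\<Delta>. real ((\<Sum>i=1..j+1. c i) choose (\<Delta> - j)))))"
proof (rule exI[of _ 1], intro conjI allI impI)
  show "(1::real) > 0" by simp
  fix n lam \<pi> assume a: "is_partition lam n" "lam \<noteq> []" "\<pi> permutes {..<n}"
  define X where "X = character lam \<pi>"
  define d where "d = character (tl lam) id"
  define b where "b = cyc_count n \<pi> 1 choose sum_list (tl lam)"
  define S where "S = (\<Sum>j=1..sum_list (tl lam). (\<Sum>i=1..j+1. cyc_count n \<pi> i) choose (sum_list (tl lam) - j))"
  have mb: "\<bar>X - d * int b\<bar> \<le> d * int S"
    using main_bound[OF a] unfolding X_def d_def b_def S_def .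
  hence "real_of_int \<bar>X - d * int b\<bar> \<le> real_of_int (d * int S)" by (simp only: of_int_le_iff)
  hence "\<bar>real_of_int X - real_of_int d * real b\<bar> \<le> real_of_int d * real S" by simp
  moreover have "real S = (\<Sum>j=1..sum_list (tl lam). real ((\<Sum>i=1..j+1. cyc_count n \<pi> i) choose (sum_list (tl lam) - j)))"
    unfolding S_def by (simp only: of_nat_sum)
  ultimately show "let \<mu> = tl lam; \<Delta> = sum_list \<mu>; c = cyc_count n \<pi>;
           d = real_of_int (character \<mu> id) in
       \<bar>real_of_int (character lam \<pi>) - d * real (c 1 choose \<Delta>)\<bar>
         \<le> 1 * d * (\<Sum>j=1..\<Delta>. real ((\<Sum>i=1..j+1. c i) choose (\<Delta> - j)))"
    unfolding Let_def X_def d_def b_def by simp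
qed

end
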